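(* Let $0\le\underline{s}<\overline{s}\le1$ with $\underline{s}=0$ or $\overline{s}=1$, $p\in(0,1)$, $u,v>0$ with $u\ne v$, with $\mathcal{E}_0\ne\emptyset$, fix $\varepsilon_0>0$ and $n\in\mathbb{N}$, and let $$\underline{\lambda}=\min\Big\{\tfrac{u-\sup C_{\varepsilon_0}}{1+\sup C_{\varepsilon_0}},\tfrac{v+\inf C_{\varepsilon_0}}{1-\inf C_{\varepsilon_0}}\Big\},\qquad \overline{\lambda}=\max\Big\{\tfrac{u-\inf C_{\varepsilon_0}}{1+\inf C_{\varepsilon_0}},\tfrac{v+\sup C_{\varepsilon_0}}{1-\sup C_{\varepsilon_0}}\Big\}.$$ Let $F_n^{[\underline{\lambda},\overline{\lambda}]}$ be the set of $f\in F^\infty_{(\underline{s},\overline{s})}$ for which there is $S\subset C_{\varepsilon_0}$ of Lebesgue measure $m(S)\ge\frac1n$ such that for each $c\in S$, $G_f(\lambda,0)=G_f(\lambda,c)=0$ for some $\lambda\in\mathcal{E}_0\cap\mathcal{E}_c\cap[\underline{\lambda},\overline{\lambda}]$, and let $\overline{F}_n^{[\underline{\lambda},\overline{\lambda}]}$ be its closure in $F^\infty_{(\underline{s},\overline{s})}$ (for the $L_\infty$-norm). If $f\in\overline{F}_n^{[\underline{\lambda},\overline{\lambda}]}$, then there exists $S\subset C_{\varepsilon_0}$ with $m(S)\ge\frac1n$ such that for every $c\in S$ the system $G_f(\lambda,0)=G_f(\lambda,c)=0$ has a solution $\lambda\in\overline{\mathcal{E}}_0\cap\overline{\mathcal{E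}}_c\cap[\underline{\lambda},\overline{\lambda}]$.
   Context: $F^\infty_{(\underline{s},\overline{s})}=\{f\in L_\infty(\underline{s},\overline{s})\cap C^0(\underline{s},\overline{s}): \int_{\underline{s}}^{\overline{s}} f(s)\frac{1-2s}{s}ds=0,\ \int_{\underline{s}}^{\overline{s}} f=1,\ f\ge0,\ f(s)\frac{1-s}{s}\in L_\infty(\underline{s},\overline{s})\}$. For $\lambda>0$, $c\in(-1,u)\cap(-v,1)$: $m(\lambda,c)=\frac{\lambda(1+c)}{\lambda(1+c)+(u-c)}$, $mm(\lambda,c)=\frac{\lambda(1-c)}{\lambda(1-c)+(v+c)}$; $\mathcal{E}_c=\{\lambda>0: m(\lambda,c),mm(\lambda,c)\in(\underline{s},\overline{s})\}$, with closure $\overline{\mathcal{E}}_c$ in $\mathbb{R}$. $C=\{c\in(-1,u)\cap(-v,1):\mathcal{E}_c\ne\emptyset\}\setminus\{0\}$, $C_{\varepsilon_0}=C\cap(-1+\varepsilon_0,u-\varepsilon_0)\cap(-v+\varepsilon_0,1-\varepsilon_0)$. For $\lambda$ with $m(\lambda,c),mm(\lambda,c)\in[\underline{s},\overline{s}]$, $G_f(\lambda,c)=p\int_{\underline{s}}^{m(\lambda,c)} f(s)\frac{1-2s}{s}ds+(1-p)\int_{mm(\lambda,c)}^{\overline{s}} f(s)\frac{1-2s}{s}ds$. *)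

theory Defs
  imports "HOL-Analysis.Analysis"
begin

definition mfun :: "real \<Rightarrow> real \<Rightarrow> real \<Rightarrow> real" where
  "mfun u lam c = lam * (1 + c) / (lam * (1 + c) + (u - c))"

definition mmfun :: "real \<Rightarrow> real \<Rightarrow> real \<Rightarrow> real" where
  "mmfun v lam c = lam * (1 - c) / (lam * (1 - c) + (v + c))"

definition Eset :: "real \<Rightarrow> real \<Rightarrow> real \<Rightarrow> real \<Rightarrow> real \<Rightarrow> real set" where
  "Eset slo shi u v c = {lam. lam > 0 \<and> mfun u lam c \<in> {slo<..<shi} \<and> mmfun v lam c \<in> {slo<..<shi}}"

definition Cset :: "real \<Rightarrow> real \<Rightarrow> real \<Rightarrow> real \<Rightarrow> real set" where
  "Cset slo shi u v =
     {c. -1 < c \<and> c < u \<and> -v < c \<and> c < 1 \<and> Eset slo shi u v c \<noteq> {}} - {0}"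

definition Ceps :: "real \<Rightarrow> real \<Rightarrow> real \<Rightarrow> real \<Rightarrow> real \<Rightarrow> real set" where
  "Ceps slo shi u v eps0 =
     Cset slo shi u v \<inter> {-1 + eps0<..<u - eps0} \<inter> {-v + eps0<..<1 - eps0}"

definition Finf :: "real \<Rightarrow> real \<Rightarrow> (real \<Rightarrow> real) set" where
  "Finf slo shi = {f.
      continuous_on {slo<..<shi} f \<and>
      bounded (f ` {slo<..<shi}) \<and>
      ((\<lambda>s. f s * (1 - 2 * s) / s) has_integral 0) {slo<..<shi} \<and>
      (f has_integral 1) {slo<..<shi} \<and>
      (\<forall>s\<in>{slo<..<shi}. f s \<ge> 0) \<and>
      bounded ((\<lambda>s. f s * (1 - s) / s) ` {slo<..<shi})}"

definition Gf :: "real \<Rightarrow> real \<Rightarrow> real \<Rightarrow> real \<Rightarrow> real \<Rightarrow> (real \<Rightarrow> real) \<Rightarrow> real \<Rightarrow> real \<Rightarrow> real" where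
  "Gf slo shi p u v f lam c =
     p * integral {slo..mfun u lam c} (\<lambda>s. f s * (1 - 2 * s) / s)
     + (1 - p) * integral {mmfun v lam c..shi} (\<lambda>s. f s * (1 - 2 * s) / s)"

definition lam_lo :: "real \<Rightarrow> real \<Rightarrow> real \<Rightarrow> real \<Rightarrow> real \<Rightarrow> real" where
  "lam_lo slo shi u v eps0 =
     (let C = Ceps slo shi u v eps0 in
      min ((u - Sup C) / (1 + Sup C)) ((v + Inf C) / (1 - Inf C)))"

definition lam_hi :: "real \<Rightarrow> real \<Rightarrow> real \<Rightarrow> real \<Rightarrow> real \<Rightarrow> real" where
  "lam_hi slo shi u v eps0 =
     (let C = Ceps slo shi u v eps0 in
      max ((u - Inf C) / (1 + Inf C)) ((v + Sup C) / (1 - Sup C)))"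

definition Fn :: "real \<Rightarrow> real \<Rightarrow> real \<Rightarrow> real \<Rightarrow> real \<Rightarrow> real \<Rightarrow> nat \<Rightarrow> (real \<Rightarrow> real) set" where
  "Fn slo shi p u v eps0 n = {f \<in> Finf slo shi.
      \<exists>S \<subseteq> Ceps slo shi u v eps0. S \<in> sets lebesgue \<and>
        emeasure lebesgue S \<ge> ennreal (1 / real n) \<and>
        (\<forall>c\<in>S. \<exists>lam \<in> Eset slo shi u v 0 \<inter> Eset slo shi u v c
                          \<inter> {lam_lo slo shi u v eps0..lam_hi slo shi u v eps0}.
              Gf slo shi p u v f lam 0 = 0 \<and> Gf slo shi p u v f lam c = 0)}"

text \<open>Closure of F_n inside F^infty w.r.t. the sup (= L-infinity, by continuity) norm on (slo, shi).\<close>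
definition Fn_closure :: "real \<Rightarrow> real \<Rightarrow> real \<Rightarrow> real \<Rightarrow> real \<Rightarrow> real \<Rightarrow> nat \<Rightarrow> (real \<Rightarrow> real) set" where
  "Fn_closure slo shi p u v eps0 n = {f \<in> Finf slo shi.
      \<forall>e>0. \<exists>g \<in> Fn slo shi p u v eps0 n. \<forall>s\<in>{slo<..<shi}. \<bar>f s - g s\<bar> \<le> e}"

end

theory Submission
  imports Defs
begin

definition wfn :: "(real \<Rightarrow> real) \<Rightarrow> real \<Rightarrow> real" where
  "wfn h = (\<lambda>s. h s * (1 - 2 * s) / s)"

lemma Finf_int:
  assumes "h \<in> Finf slo shi"
  shows "(wfn h) integrable_on {slo..shi}" "integral {slo..shi} (wfn h) = 0"
proof -
  have "((\<lambda>s. h s * (1 - 2 * s) / s) has_integral 0) {slo<..<shi}"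
    using assms unfolding Finf_def by blast
  then have "(wfn h has_integral 0) {slo..shi}"
    unfolding wfn_def by (simp add: has_integral_Icc_iff_Ioo)
  then show "(wfn h) integrable_on {slo..shi}" "integral {slo..shi} (wfn h) = 0"
    by (auto simp: integrable_on_def integral_unique)
qed

lemma Finf_split:
  assumes "h \<in> Finf slo shi" "slo \<le> a" "a \<le> shi"
  shows "integral {slo..a} (wfn h) = - integral {a..shi} (wfn h)"
  using Henstock_Kurzweil_Integration.integral_combine[OF assms(2,3) Finf_int(1)[OF assms(1)]] Finf_int(2)[OF assms(1)]
  by simp

lemma J_conv:
  fixes x :: real and xs :: "nat \<Rightarrow> real"
  assumes hF: "\<And>j. h j \<in> Finf slo shi" and fF: "f \<in> Finf slo shi"
    and bd: "\<And>j s. s \<in> {slo<..<shi} \<Longrightarrow> \<bar>h j s - f s\<bar> \<le> e j"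
    and e0: "e \<longlonglongrightarrow> 0"
    and xin: "\<And>j. xs j \<in> {slo..shi}" and xlim: "xs \<longlonglongrightarrow> x" and xpos: "x > 0"
    and xin': "x \<in> {slo..shi}" and shi1: "shi \<le> 1" and slo0: "0 \<le> slo" "slo < shi"
  shows "(\<lambda>j. integral {xs j..shi} (wfn (h j))) \<longlonglongrightarrow> integral {x..shi} (wfn f)"
proof -
  define A where "A j = integral {xs j..shi} (\<lambda>s. wfn (h j) s - wfn f s)" for j
  have intf: "wfn f integrable_on {xs j..shi}" for j
    by (rule integrable_subinterval_real[OF Finf_int(1)[OF fF]]) (use xin in auto)
  have inth: "wfn (h j) integrable_on {xs j..shi}" for j
    by (rule integrable_subinterval_real[OF Finf_int(1)[OF hF]]) (use xin in auto)
  have eq: "integral {xs j..shi} (wfn (h j)) = A j + integral {xs j..shi} (wfn f)" for j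
    unfolding A_def using integral_diff[OF inth intf] by simp
  have "\<forall>\<^sub>F j in sequentially. xs j > x / 2"
    using xlim xpos by (intro order_tendstoD) auto
  then have ev: "\<forall>\<^sub>F j in sequentially. norm (A j) \<le> e j * (2 / x)"
  proof eventually_elim
    case (elim j)
    have ej: "e j \<ge> 0" using bd[of "(slo+shi)/2" j] slo0 by auto
    have pt: "norm (wfn (h j) s - wfn f s) \<le> e j * (2 / x)" if s: "s \<in> {xs j<..<shi}" for s
    proof -
      have s1: "s > x/2" "s \<le> 1" "slo < s" "s < shi" using s elim shi1 xin[of j] by auto
      have "wfn (h j) s - wfn f s = (h j s - f s) * (1 - 2 * s) / s" unfolding wfn_def
        by (simp add: diff_divide_distrib left_diff_distrib)
      then have "norm (wfn (h j) s - wfn f s) = (\<bar>h j s - f s\<bar>) * (\<bar>1 - 2 * s\<bar>) / s"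
        using s1 xpos by (simp add: abs_mult)
      also have "\<dots> \<le> e j * 1 / s"
        using s1 xpos bd[of s j] ej by (intro divide_right_mono mult_mono) auto
      also have "\<dots> \<le> e j * (2 / x)"
        using s1 xpos ej mult_right_mono[of x "s * 2" "e j"] by (simp add: field_simps)
      finally show ?thesis .
    qed
    have "norm (A j) \<le> integral {xs j<..<shi} (\<lambda>_. e j * (2 / x))"
      unfolding A_def integral_open_interval_real
      by (rule integral_norm_bound_integral)
        (use integrable_diff[OF inth intf] pt in \<open>auto simp: integrable_on_open_interval_real\<close>)
    also have "\<dots> = (shi - xs j) * (e j * (2 / x))"
      using xin[of j] by (simp flip: integral_open_interval_real)
    also have "\<dots> \<le> 1 * (e j * (2 / x))"
      using xin[of j] slo0 shi1 ej xpos by (intro mult_right_mono) auto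
    finally show ?case by simp
  qed
  have A0: "A \<longlonglongrightarrow> 0"
    by (rule Lim_null_comparison[OF ev]) (use tendsto_mult_left_zero[OF e0, of "2 / x"] in simp)
  have B: "(\<lambda>j. integral {xs j..shi} (wfn f)) \<longlonglongrightarrow> integral {x..shi} (wfn f)"
    by (rule continuous_on_tendsto_compose[OF indefinite_integral_continuous_1'[OF Finf_int(1)[OF fF]] xlim xin'])
      (use xin in auto)
  show ?thesis
    unfolding eq using tendsto_add[OF A0 B] by simp
qed


lemma Gf_eq: "Gf slo shi p u v h lam c =
  p * integral {slo..mfun u lam c} (wfn h) + (1 - p) * integral {mmfun v lam c..shi} (wfn h)"
  by (simp add: Gf_def wfn_def)

lemma G_conv:
  assumes hF: "\<And>j. h j \<in> Finf slo shi" and fF: "f \<in> Finf slo shi"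
    and bd: "\<And>j s. s \<in> {slo<..<shi} \<Longrightarrow> \<bar>h j s - f s\<bar> \<le> e j"
    and e0: "e \<longlonglongrightarrow> 0"
    and lin: "\<And>j. mfun u (ls j) c \<in> {slo<..<shi} \<and> mmfun v (ls j) c \<in> {slo<..<shi}"
    and llim: "ls \<longlonglongrightarrow> l" and lpos: "l > 0"
    and c: "-1 < c" "c < u" "-v < c" "c < 1"
    and sl: "0 \<le> slo" "slo < shi" "shi \<le> 1"
  shows "(\<lambda>j. Gf slo shi p u v (h j) (ls j) c) \<longlonglongrightarrow> Gf slo shi p u v f l c"
proof -
  have d1: "l * (1 + c) + (u - c) \<noteq> 0" using lpos c by (smt (verit) mult_pos_pos)
  have d2: "l * (1 - c) + (v + c) \<noteq> 0" using lpos c by (smt (verit) mult_pos_pos)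
  have m: "(\<lambda>j. mfun u (ls j) c) \<longlonglongrightarrow> mfun u l c"
    unfolding mfun_def by (intro tendsto_intros llim d1)
  have mm: "(\<lambda>j. mmfun v (ls j) c) \<longlonglongrightarrow> mmfun v l c"
    unfolding mmfun_def by (intro tendsto_intros llim d2)
  have mpos: "mfun u l c > 0" unfolding mfun_def using lpos c
  proof (intro divide_pos_pos)
    have "0 < l * (1 + c)" using lpos c by (intro mult_pos_pos) auto
    then show "0 < l * (1 + c) + (u - c)" using c by linarith
  qed (use lpos c in auto)
  have mmpos: "mmfun v l c > 0" unfolding mmfun_def using lpos c
  proof (intro divide_pos_pos)
    have "0 < l * (1 - c)" using lpos c by (intro mult_pos_pos) auto
    then show "0 < l * (1 - c) + (v + c)" using c by linarith
  qed (use lpos c in auto)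
  have min: "mfun u l c \<in> {slo..shi}"
    using LIMSEQ_le_const[OF m, of slo] LIMSEQ_le_const2[OF m, of shi] lin
    by (auto intro: less_imp_le)
  have mmin: "mmfun v l c \<in> {slo..shi}"
    using LIMSEQ_le_const[OF mm, of slo] LIMSEQ_le_const2[OF mm, of shi] lin
    by (auto intro: less_imp_le)
  have lin': "mfun u (ls j) c \<in> {slo..shi}" "mmfun v (ls j) c \<in> {slo..shi}" for j
    using lin[of j] by auto
  have eq1: "Gf slo shi p u v (h j) (ls j) c =
     p * (- integral {mfun u (ls j) c..shi} (wfn (h j))) + (1 - p) * integral {mmfun v (ls j) c..shi} (wfn (h j))" for j
    unfolding Gf_eq using Finf_split[OF hF, of "mfun u (ls j) c"] lin'[of j] by simp
  have eq2: "Gf slo shi p u v f l c =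
     p * (- integral {mfun u l c..shi} (wfn f)) + (1 - p) * integral {mmfun v l c..shi} (wfn f)"
    unfolding Gf_eq using Finf_split[OF fF, of "mfun u l c"] min by simp
  show ?thesis unfolding eq1 eq2
    by (intro tendsto_intros J_conv[OF hF fF bd e0] lin' m mm mpos mmpos min mmin sl) auto
qed


theorem proposition12:
  fixes slo shi p u v eps0 :: real and n :: nat and f :: "real \<Rightarrow> real"
  assumes "0 \<le> slo" "slo < shi" "shi \<le> 1" "slo = 0 \<or> shi = 1"
    and "0 < p" "p < 1"
    and "0 < u" "0 < v" "u \<noteq> v"
    and "Eset slo shi u v 0 \<noteq> {}"
    and "eps0 > 0" and "n \<ge> 1"
    and "f \<in> Fn_closure slo shi p u v eps0 n"
  shows "\<exists>S \<subseteq> Ceps slo shi u v eps0. S \<in> sets lebesgue \<and>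
           emeasure lebesgue S \<ge> ennreal (1 / real n) \<and>
           (\<forall>c\<in>S. \<exists>lam \<in> closure (Eset slo shi u v 0) \<inter> closure (Eset slo shi u v c)
                          \<inter> {lam_lo slo shi u v eps0..lam_hi slo shi u v eps0}.
              Gf slo shi p u v f lam 0 = 0 \<and> Gf slo shi p u v f lam c = 0)"
proof -
  define C where "C = Ceps slo shi u v eps0"
  define lo where "lo = lam_lo slo shi u v eps0"
  define hi where "hi = lam_hi slo shi u v eps0"
  have fF: "f \<in> Finf slo shi" and cl: "\<forall>e>0. \<exists>g \<in> Fn slo shi p u v eps0 n. \<forall>s\<in>{slo<..<shi}. \<bar>f s - g s\<bar> \<le> e"
    using assms(13) unfolding Fn_closure_def by auto
  have "\<forall>k::nat. \<exists>g. g \<in> Fn slo shi p u v eps0 n \<and> (\<forall>s\<in>{slo<..<shi}. \<bar>f s - g s\<bar> \<le> 1 / Suc k)"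
    using cl by (metis of_nat_0_less_iff zero_less_Suc zero_less_divide_1_iff)
  then obtain g where g: "\<And>k. g k \<in> Fn slo shi p u v eps0 n"
    and gb: "\<And>k s. s \<in> {slo<..<shi} \<Longrightarrow> \<bar>f s - g k s\<bar> \<le> 1 / Suc k"
    by metis
  have gF: "g k \<in> Finf slo shi" for k using g[of k] unfolding Fn_def by auto
  have "\<forall>k. \<exists>S. S \<subseteq> C \<and> S \<in> sets lebesgue \<and> emeasure lebesgue S \<ge> ennreal (1 / real n) \<and>
        (\<forall>c\<in>S. \<exists>lam \<in> Eset slo shi u v 0 \<inter> Eset slo shi u v c \<inter> {lo..hi}.
              Gf slo shi p u v (g k) lam 0 = 0 \<and> Gf slo shi p u v (g k) lam c = 0)"
    using g unfolding Fn_def C_def lo_def hi_def by blast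
  then obtain SS where SSC: "\<And>k. SS k \<subseteq> C" and SSm: "\<And>k. SS k \<in> sets lebesgue"
    and SSe: "\<And>k. emeasure lebesgue (SS k) \<ge> ennreal (1 / real n)"
    and SSp: "\<And>k c. c \<in> SS k \<Longrightarrow> \<exists>lam \<in> Eset slo shi u v 0 \<inter> Eset slo shi u v c \<inter> {lo..hi}.
              Gf slo shi p u v (g k) lam 0 = 0 \<and> Gf slo shi p u v (g k) lam c = 0"
    by metis
  define T where "T m = (\<Union>k\<in>{m..}. SS k)" for m
  define S where "S = (\<Inter>m. T m)"
  have Cbd: "C \<subseteq> {-1..1}" unfolding C_def Ceps_def Cset_def by auto
  have Tm: "T m \<in> sets lebesgue" for m unfolding T_def using SSm by auto
  have Tfin: "emeasure lebesgue (T m) \<noteq> \<infinity>" for m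
  proof -
    have "emeasure lebesgue (T m) \<le> emeasure lebesgue {-1..1::real}"
      by (rule emeasure_mono) (use SSC Cbd in \<open>auto simp: T_def\<close>)
    then show ?thesis by (auto simp: top_unique)
  qed
  have Tdec: "decseq T" unfolding T_def decseq_def by (auto intro: order_trans)
  have Smeas: "emeasure lebesgue S \<ge> ennreal (1 / real n)"
  proof -
    have "(INF m. emeasure lebesgue (T m)) = emeasure lebesgue S"
      unfolding S_def by (rule INF_emeasure_decseq) (use Tm Tdec Tfin in auto)
    moreover have "emeasure lebesgue (T m) \<ge> ennreal (1 / real n)" for m
    proof -
      have "emeasure lebesgue (SS m) \<le> emeasure lebesgue (T m)"
        by (rule emeasure_mono) (use Tm in \<open>auto simp: T_def\<close>)
      then show ?thesis using SSe[of m] by order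
    qed
    ultimately show ?thesis by (metis le_INF_iff)
  qed
  have SC: "S \<subseteq> C" unfolding S_def T_def using SSC by blast
  have Sm: "S \<in> sets lebesgue" unfolding S_def using Tm by auto
  have main: "\<exists>lam \<in> closure (Eset slo shi u v 0) \<inter> closure (Eset slo shi u v c) \<inter> {lo..hi}.
              Gf slo shi p u v f lam 0 = 0 \<and> Gf slo shi p u v f lam c = 0" if cS: "c \<in> S" for c
  proof -
    have "\<forall>m. \<exists>k. m \<le> k \<and> c \<in> SS k" using cS unfolding S_def T_def by auto
    then obtain kk where kk: "\<And>m. m \<le> kk m" "\<And>m. c \<in> SS (kk m)" by metis
    have "\<forall>j. \<exists>lam. lam \<in> Eset slo shi u v 0 \<inter> Eset slo shi u v c \<inter> {lo..hi} \<and>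
              Gf slo shi p u v (g (kk j)) lam 0 = 0 \<and> Gf slo shi p u v (g (kk j)) lam c = 0"
      using SSp kk(2) by blast
    then obtain ls where ls: "\<And>j. ls j \<in> Eset slo shi u v 0 \<inter> Eset slo shi u v c \<inter> {lo..hi}"
      and lsG: "\<And>j. Gf slo shi p u v (g (kk j)) (ls j) 0 = 0 \<and> Gf slo shi p u v (g (kk j)) (ls j) c = 0"
      by metis
    have "seq_compact {lo..hi}" by (rule compact_imp_seq_compact) simp
    then obtain l r where l: "l \<in> {lo..hi}" and r: "strict_mono r" and lr: "(ls \<circ> r) \<longlonglongrightarrow> l"
      unfolding seq_compact_def using ls by blast
    have cC: "c \<in> C" using cS SC by auto
    have bda: "bdd_above C" unfolding C_def Ceps_def by (auto intro: bdd_aboveI[of _ "u - eps0"])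
    have bdb: "bdd_below C" unfolding C_def Ceps_def by (auto intro: bdd_belowI[of _ "-v + eps0"])
    have Cprop: "x \<in> C \<Longrightarrow> -1 < x \<and> x < u \<and> -v < x \<and> x < 1 \<and> x < u - eps0 \<and> -v + eps0 < x" for x
      unfolding C_def Ceps_def Cset_def by auto
    have "c \<le> Sup C"
      using cC bda by (auto intro: cSup_upper)
    moreover have "Sup C \<le> u - eps0"
      by (rule cSup_least) (use cC in blast, use Cprop in fastforce)
    ultimately have sup1: "c \<le> Sup C" "Sup C \<le> u - eps0" by auto
    have "Inf C \<le> c"
      using cC bdb by (auto intro: cInf_lower)
    moreover have "-v + eps0 \<le> Inf C"
      by (rule cInf_greatest) (use cC in blast, use Cprop in fastforce)
    ultimately have inf1: "Inf C \<le> c" "-v + eps0 \<le> Inf C" by auto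
    have lopos: "lo > 0"
    proof -
      have "(u - Sup C) / (1 + Sup C) > 0" using sup1 Cprop[OF cC] assms(11) by (intro divide_pos_pos) auto
      moreover have "(v + Inf C) / (1 - Inf C) > 0" using inf1 Cprop[OF cC] assms(11) by (intro divide_pos_pos) auto
      ultimately show ?thesis unfolding lo_def lam_lo_def C_def[symmetric] Let_def by simp
    qed
    have lpos: "l > 0" using l lopos by auto
    define e where "e j = 1 / real (Suc (kk (r j)))" for j
    have e0: "e \<longlonglongrightarrow> 0"
    proof (rule tendsto_sandwich[of "\<lambda>_. 0" _ _ "\<lambda>j. 1 / real (Suc j)"])
      show "\<forall>\<^sub>F j in sequentially. 0 \<le> e j" by (simp add: e_def)
      show "\<forall>\<^sub>F j in sequentially. e j \<le> 1 / real (Suc j)"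
      proof (intro always_eventually allI)
        fix j
        have "j \<le> r j" using r by (rule seq_suble)
        also have "r j \<le> kk (r j)" by (rule kk(1))
        finally show "e j \<le> 1 / real (Suc j)" unfolding e_def by (simp add: frac_le)
      qed
      show "(\<lambda>j. 1 / real (Suc j)) \<longlonglongrightarrow> 0" using LIMSEQ_inverse_real_of_nat by (simp add: inverse_eq_divide)
    qed simp
    define h where "h j = g (kk (r j))" for j
    have hF: "h j \<in> Finf slo shi" for j unfolding h_def by (rule gF)
    have hb: "\<bar>h j s - f s\<bar> \<le> e j" if "s \<in> {slo<..<shi}" for j s
      using gb[OF that, of "kk (r j)"] unfolding h_def e_def by (simp add: abs_minus_commute)
    have conv: "Gf slo shi p u v f l c' = 0"
      if c': "-1 < c'" "c' < u" "-v < c'" "c' < 1" and inE: "\<And>j. ls j \<in> Eset slo shi u v c'"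
        and G0: "\<And>j. Gf slo shi p u v (g (kk j)) (ls j) c' = 0" for c'
    proof -
      have "(\<lambda>j. Gf slo shi p u v (h j) ((ls \<circ> r) j) c') \<longlonglongrightarrow> Gf slo shi p u v f l c'"
        by (rule G_conv[OF hF fF hb e0 _ lr lpos c' assms(1-3)])
          (use inE in \<open>auto simp: Eset_def\<close>)
      moreover have "(\<lambda>j. Gf slo shi p u v (h j) ((ls \<circ> r) j) c') = (\<lambda>_. 0)"
        using G0 by (simp add: h_def)
      ultimately have "(\<lambda>_. 0::real) \<longlonglongrightarrow> Gf slo shi p u v f l c'" by simp
      then show ?thesis by (simp add: LIMSEQ_const_iff)
    qed
    have "Gf slo shi p u v f l 0 = 0"
      by (rule conv) (use ls lsG assms(7,8) in auto)
    moreover have "Gf slo shi p u v f l c = 0"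
      by (rule conv) (use ls lsG Cprop[OF cC] in auto)
    moreover have "l \<in> closure (Eset slo shi u v 0)" "l \<in> closure (Eset slo shi u v c)"
      unfolding closure_sequential using ls lr by (intro exI[of _ "ls \<circ> r"]; simp)+
    ultimately show ?thesis using l by blast
  qed
  show ?thesis
    using SC Sm Smeas main unfolding C_def lo_def hi_def by blast
qed

end
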